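(* Let $\{g_k\}_{k\ge1}\subset\mathbb{R}^{+}\cup\{0\}$ be arbitrary, and for $n=1,2,\dots$ define $\Gamma_{(n)}:\mathcal{O}\to\mathcal{O}$ by $$\Gamma_{(n)}\varphi(x)=\frac{\varphi(x)\exp\!\left(x\sum_{k=1}^{n}g_k\right)}{\sum_{y\in E_\varphi}\varphi(y)\exp\!\left(y\sum_{k=1}^{n}g_k\right)},\qquad x\in\mathbb{R}.$$ If the real sequence $\left\{\sum_{k=1}^{n}g_k\right\}_{n\ge1}$ is Cauchy, then for every $\varphi\in\mathcal{O}$ the sequence $\{\Gamma_{(n)}\varphi\}_{n\ge1}$ is a Cauchy sequence in the metric space $(\mathcal{O},d)$.
   Context: A normalized fitness distribution (NFD) is a function $\varphi:\mathbb{R}\to[0,1]$ whose support $E_\varphi=\{x:\varphi(x)\neq0\}$ is finite and which satisfies $\sum_{x\in E_\varphi}\varphi(x)=1$; $\mathcal{O}$ denotes the space of all NFDs. The metric $d$ on $\mathcal{O}$ is $d(\varphi_1,\varphi_2)=\sum_{x\in E_{\varphi_1}\cup E_{\varphi_2}}|\varphi_1(x)-\varphi_2(x)|$. *)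

theory Defs
  imports "HOL-Analysis.Analysis"
begin

definition supp :: "(real \<Rightarrow> real) \<Rightarrow> real set" where
  "supp \<phi> = {x. \<phi> x \<noteq> 0}"

definition NFD :: "(real \<Rightarrow> real) set" where
  "NFD = {\<phi>. (\<forall>x. 0 \<le> \<phi> x \<and> \<phi> x \<le> 1) \<and> finite (supp \<phi>) \<and> (\<Sum>x\<in>supp \<phi>. \<phi> x) = 1}"

definition nfd_dist :: "(real \<Rightarrow> real) \<Rightarrow> (real \<Rightarrow> real) \<Rightarrow> real" where
  "nfd_dist \<phi>1 \<phi>2 = (\<Sum>x\<in>supp \<phi>1 \<union> supp \<phi>2. \<bar>\<phi>1 x - \<phi>2 x\<bar>)"

definition Gamma :: "(nat \<Rightarrow> real) \<Rightarrow> nat \<Rightarrow> (real \<Rightarrow> real) \<Rightarrow> (real \<Rightarrow> real)" where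
  "Gamma g n \<phi> = (\<lambda>x. \<phi> x * exp (x * (\<Sum>k=1..n. g k)) /
      (\<Sum>y\<in>supp \<phi>. \<phi> y * exp (y * (\<Sum>k=1..n. g k))))"

definition nfd_Cauchy :: "(nat \<Rightarrow> (real \<Rightarrow> real)) \<Rightarrow> bool" where
  "nfd_Cauchy s \<longleftrightarrow> (\<forall>e>0. \<exists>N\<ge>1. \<forall>m\<ge>N. \<forall>n\<ge>N. nfd_dist (s m) (s n) < e)"

end

theory Submission
  imports Defs
begin

theorem theorem1:
  fixes g :: "nat \<Rightarrow> real" and \<phi> :: "real \<Rightarrow> real"
  assumes "\<And>k. k \<ge> 1 \<Longrightarrow> g k \<ge> 0"
    and "Cauchy (\<lambda>n. \<Sum>k=1..n. g k)"
    and "\<phi> \<in> NFD"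
  shows "nfd_Cauchy (\<lambda>n. Gamma g n \<phi>)"
proof -
  define S where "S = (\<lambda>n. \<Sum>k=1..n. g k)"
  define A where "A = supp \<phi>"
  define Z where "Z = (\<lambda>s. \<Sum>y\<in>A. \<phi> y * exp (y * s))"
  define f where "f = (\<lambda>s x. \<phi> x * exp (x * s) / Z s)"
  have fin: "finite A" and s1: "(\<Sum>x\<in>A. \<phi> x) = 1" and nn: "\<And>x. \<phi> x \<ge> 0"
    using assms(3) by (auto simp: NFD_def A_def)
  have Ane: "A \<noteq> {}" using s1 by auto
  have pos: "\<And>y. y \<in> A \<Longrightarrow> \<phi> y > 0" using nn by (force simp: A_def supp_def less_le)
  have Zpos: "Z s > 0" for s unfolding Z_def
    by (rule sum_pos[OF fin Ane]) (simp add: pos)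
  have G: "Gamma g n \<phi> = f (S n)" for n
    by (simp add: Gamma_def f_def Z_def S_def A_def)
  obtain L where L: "S \<longlonglongrightarrow> L"
    using assms(2) unfolding S_def[symmetric] by (auto simp: Cauchy_convergent_iff convergent_def)
  have Zt: "(\<lambda>n. Z (S n)) \<longlonglongrightarrow> Z L" unfolding Z_def
    by (intro tendsto_intros L)
  have ft: "(\<lambda>n. f (S n) x) \<longlonglongrightarrow> f L x" for x unfolding f_def
    using Zpos[of L] by (intro tendsto_intros L Zt) auto
  define F where "F = (\<lambda>n. \<Sum>x\<in>A. \<bar>f (S n) x - f L x\<bar>)"
  have F0: "F \<longlonglongrightarrow> 0"
  proof -
    have "F \<longlonglongrightarrow> (\<Sum>x\<in>A. \<bar>f L x - f L x\<bar>)" unfolding F_def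
      by (intro tendsto_intros ft)
    then show ?thesis by simp
  qed
  have suppf: "supp (f s) \<subseteq> A" for s
    by (auto simp: supp_def A_def f_def)
  have dist: "nfd_dist (f (S m)) (f (S n)) \<le> F m + F n" for m n
  proof -
    have "nfd_dist (f (S m)) (f (S n)) \<le> (\<Sum>x\<in>A. \<bar>f (S m) x - f (S n) x\<bar>)"
      unfolding nfd_dist_def using suppf fin by (intro sum_mono2) auto
    also have "\<dots> \<le> (\<Sum>x\<in>A. \<bar>f (S m) x - f L x\<bar> + \<bar>f (S n) x - f L x\<bar>)"
      by (intro sum_mono) linarith
    also have "\<dots> = F m + F n" by (simp add: F_def sum.distrib)
    finally show ?thesis .
  qed
  show ?thesis unfolding nfd_Cauchy_def G
  proof (intro allI impI)
    fix e :: real assume e: "e > 0"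
    then have "\<forall>\<^sub>F n in sequentially. F n < e/2"
      using F0 by (auto dest: order_tendstoD(2)[where a="e/2"])
    then obtain N where N: "\<And>n. n \<ge> N \<Longrightarrow> F n < e/2"
      by (auto simp: eventually_sequentially)
    show "\<exists>N\<ge>1. \<forall>m\<ge>N. \<forall>n\<ge>N. nfd_dist (f (S m)) (f (S n)) < e"
    proof (intro exI[of _ "N+1"] conjI allI impI)
      fix m n assume "N + 1 \<le> m" "N + 1 \<le> n"
      then show "nfd_dist (f (S m)) (f (S n)) < e"
        using dist[of m n] N[of m] N[of n] by simp
    qed simp
  qed
qed

end
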